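(* Let $I$ be a finite set of positive integers with $\#I\ge2$, let $m=\max I$, $I^-=I\setminus\{m\}$, $m^-=\max I^-$, and $$\rho=\min\left(m!+1,\ (m!\cdot\#I)^{1/(m-m^-)}\right).$$ Then every complex root of $d(I;z)$ lies in the union of the discs $\mathcal D_k=\{z\in\mathbb C\mid |z-k|\le\rho\}$, $k=0,1,\dots,m-1$. In particular, if $d(I;z_0)=0$ then $|z_0|\le\rho+m-1$, $\mathrm{Re}(z_0)\ge-\rho$, and $|\mathrm{Im}(z_0)|\le\rho$.
   Context: $d(I;z)$ is the descent polynomial: the unique polynomial whose value at each integer $n>\max I$ is the number of permutations $\pi\in\mathfrak S_n$ with $\{j\mid\pi_j>\pi_{j+1}\}=I$, evaluated at complex $z$. *)

theory Defs
  imports "HOL-Analysis.Analysis" "HOL-Computational_Algebra.Polynomial" "HOL-Combinatorics.Permutations"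
begin

definition descent_set :: "nat \<Rightarrow> (nat \<Rightarrow> nat) \<Rightarrow> nat set" where
  "descent_set n \<pi> = {j. 1 \<le> j \<and> j < n \<and> \<pi> j > \<pi> (Suc j)}"

definition descent_count :: "nat set \<Rightarrow> nat \<Rightarrow> nat" where
  "descent_count I n = card {\<pi>. \<pi> permutes {1..n} \<and> descent_set n \<pi> = I}"

definition descent_poly :: "nat set \<Rightarrow> complex poly" where
  "descent_poly I = (THE p. \<forall>n::nat. n > (if I = {} then 0 else Max I) \<longrightarrow>
                        poly p (of_nat n) = of_nat (descent_count I n))"

end

theory Submission
  imports Defs
begin


definition Ls :: "nat set \<Rightarrow> nat list set" where
  "Ls V = {xs. distinct xs \<and> set xs = V}"
definition Des :: "nat list \<Rightarrow> nat set" where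
  "Des xs = {j. 1 \<le> j \<and> j < length xs \<and> xs!(j-1) > xs!j}"
definition cnt :: "nat set \<Rightarrow> nat set \<Rightarrow> nat" where
  "cnt V J = card {xs \<in> Ls V. Des xs = J}"

lemma finite_Ls: "finite V \<Longrightarrow> finite (Ls V)"
proof -
  assume f: "finite V"
  have "Ls V \<subseteq> {xs. set xs \<subseteq> V \<and> length xs \<le> card V}"
    unfolding Ls_def using distinct_card by fastforce
  thus ?thesis using finite_lists_length_le[OF f] finite_subset by blast
qed

lemma Des_map: "strict_mono_on (set xs) f \<Longrightarrow> Des (map f xs) = Des xs"
  unfolding Des_def
  by (auto simp: strict_mono_on_less)

lemma Des_subset: "Des xs \<subseteq> {1..<length xs}"
  unfolding Des_def by auto

lemma cnt_iso:
  assumes sm: "strict_mono_on A f" and bij: "bij_betw f A B"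
  shows "cnt A J = cnt B J"
proof -
  have inj: "inj_on (map f) {xs \<in> Ls A. Des xs = J}"
    unfolding inj_on_def Ls_def
    using bij by (auto simp: bij_betw_def intro: map_inj_on)
  have "map f ` {xs \<in> Ls A. Des xs = J} = {xs \<in> Ls B. Des xs = J}"
  proof
    show "map f ` {xs \<in> Ls A. Des xs = J} \<subseteq> {xs \<in> Ls B. Des xs = J}"
      using bij sm by (auto simp: Ls_def Des_map bij_betw_def distinct_map
          intro: inj_on_subset)
  next
    show "{xs \<in> Ls B. Des xs = J} \<subseteq> map f ` {xs \<in> Ls A. Des xs = J}"
    proof
      fix ws assume ws: "ws \<in> {xs \<in> Ls B. Des xs = J}"
      define g where "g = inv_into A f"
      have fg: "\<And>w. w \<in> B \<Longrightarrow> f (g w) = w"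
        using bij unfolding g_def by (simp add: bij_betw_def f_inv_into_f)
      have b2: "bij_betw g B A" using bij unfolding g_def by (rule bij_betw_inv_into)
      let ?ys = "map g ws"
      have e: "map f ?ys = ws" using ws fg by (auto simp: Ls_def map_idI)
      have ysA: "?ys \<in> Ls A" using ws b2
        by (auto simp: Ls_def distinct_map bij_betw_def)
      have "Des ?ys = J"
        using Des_map[of ?ys f] sm ysA ws e
        by (auto simp: Ls_def)
      thus "ws \<in> map f ` {xs \<in> Ls A. Des xs = J}" using e ysA by force
    qed
  qed
  thus ?thesis unfolding cnt_def using card_image[OF inj] by simp
qed

lemma rank_exists:
  fixes V :: "nat set"
  assumes "finite V"
  shows "\<exists>f. strict_mono_on V f \<and> bij_betw f V {1..card V}"
proof -
  define f where "f x = card {y\<in>V. y \<le> x}" for x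
  have sm: "strict_mono_on V f"
  proof (rule strict_mono_onI)
    fix x y assume "x \<in> V" "y \<in> V" "x < y"
    have "{z\<in>V. z \<le> x} \<subseteq> {z\<in>V. z \<le> y}" using \<open>x < y\<close> by auto
    moreover have "y \<in> {z\<in>V. z \<le> y}" "y \<notin> {z\<in>V. z \<le> x}" using \<open>y \<in> V\<close> \<open>x < y\<close> by auto
    ultimately have "{z\<in>V. z \<le> x} \<subset> {z\<in>V. z \<le> y}" by blast
    thus "f x < f y" unfolding f_def using assms by (intro psubset_card_mono) auto
  qed
  have inj: "inj_on f V" using sm by (rule strict_mono_on_imp_inj_on)
  have sub: "f ` V \<subseteq> {1..card V}"
  proof
    fix u assume "u \<in> f ` V"
    then obtain x where x: "x \<in> V" "u = f x" by auto
    have "x \<in> {y\<in>V. y \<le> x}" using x by auto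
    hence "0 < f x" unfolding f_def using assms by (subst card_gt_0_iff) auto
    hence "1 \<le> f x" by simp
    moreover have "f x \<le> card V" unfolding f_def using assms by (intro card_mono) auto
    ultimately show "u \<in> {1..card V}" using x by auto
  qed
  have "card (f ` V) = card {1..card V}" using card_image[OF inj] by simp
  hence "f ` V = {1..card V}" using sub by (intro card_subset_eq) auto
  thus ?thesis using sm inj by (auto simp: bij_betw_def)
qed

lemma cnt_card:
  assumes "finite A" "finite B" "card A = card B"
  shows "cnt A J = cnt B J"
proof -
  obtain f where f: "strict_mono_on A f" "bij_betw f A {1..card A}" using rank_exists assms by blast
  obtain g where g: "strict_mono_on B g" "bij_betw g B {1..card B}" using rank_exists assms by blast
  have "cnt A J = cnt {1..card A} J" by (rule cnt_iso) fact+
  also have "\<dots> = cnt B J" using cnt_iso[OF g] assms(3) by simp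
  finally show ?thesis .
qed

lemma sorted_of_noDes:
  assumes "distinct xs" "\<And>j. j \<in> Des xs \<Longrightarrow> False"
  shows "sorted xs"
  unfolding sorted_iff_nth_Suc
proof (intro allI impI)
  fix i assume "Suc i < length xs"
  hence "Suc i \<notin> Des xs" using assms by blast
  thus "xs ! i \<le> xs ! Suc i" using \<open>Suc i < length xs\<close> unfolding Des_def by auto
qed

lemma Des_sorted: "sorted xs \<Longrightarrow> Des xs = {}"
proof -
  assume s: "sorted xs"
  { fix j assume j: "j \<in> Des xs"
    hence "j - 1 \<le> j" "j < length xs" unfolding Des_def by auto
    hence "xs!(j-1) \<le> xs!j" using s by (rule_tac sorted_nth_mono) auto
    hence False using j unfolding Des_def by auto }
  thus ?thesis by blast
qed

lemma cnt_empty: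
  assumes "finite V" shows "cnt V {} = 1"
proof -
  have "{xs \<in> Ls V. Des xs = {}} = {sorted_list_of_set V}"
  proof
    show "{xs \<in> Ls V. Des xs = {}} \<subseteq> {sorted_list_of_set V}"
      using sorted_of_noDes assms
      by (auto simp: Ls_def intro!: sorted_distinct_set_unique)
    have "Des (sorted_list_of_set V) = {}"
      by (rule Des_sorted) simp
    thus "{sorted_list_of_set V} \<subseteq> {xs \<in> Ls V. Des xs = {}}"
      using assms by (auto simp: Ls_def)
  qed
  thus ?thesis unfolding cnt_def by simp
qed

lemma Des_append_prefix: "Des (ys @ zs) \<inter> {1..<length ys} = Des ys"
  unfolding Des_def by (auto simp: nth_append)

lemma Des_append_sorted:
  assumes "sorted zs" "j \<in> Des (ys @ zs)" shows "j \<le> length ys"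
proof (rule ccontr)
  assume "\<not> j \<le> length ys"
  hence jl: "j > length ys" by simp
  have jb: "j < length ys + length zs" "(ys@zs)!j < (ys@zs)!(j-1)"
    using assms(2) unfolding Des_def by auto
  have nl: "\<not> j - 1 < length ys" using jl by simp
  have e1: "(ys@zs)!(j-1) = zs!(j-1-length ys)" using nl by (simp add: nth_append)
  have e2: "(ys@zs)!j = zs!(j-length ys)" using jl by (simp add: nth_append)
  have "zs!(j-1-length ys) \<le> zs!(j-length ys)"
    using assms(1) jb jl by (intro sorted_nth_mono) auto
  thus False using jb e1 e2 by simp
qed

lemma sorted_suffix:
  assumes "\<And>j. j \<in> Des (ys @ zs) \<Longrightarrow> j \<le> length ys"
  shows "sorted zs"
  unfolding sorted_iff_nth_Suc
proof (intro allI impI)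
  fix i assume i: "Suc i < length zs"
  define j where "j = length ys + Suc i"
  have "j \<notin> Des (ys @ zs)" using assms[of j] unfolding j_def by auto
  moreover have "1 \<le> j" "j < length (ys @ zs)" using i unfolding j_def by auto
  ultimately have "\<not> (ys@zs)!(j-1) > (ys@zs)!j" unfolding Des_def by auto
  moreover have "(ys@zs)!(j-1) = zs!i" "(ys@zs)!j = zs!(Suc i)" unfolding j_def
    by (simp_all add: nth_append)
  ultimately show "zs!i \<le> zs!(Suc i)" by simp
qed

lemma cnt_rec:
  fixes V :: "nat set"
  assumes fin: "finite V" and n: "card V = n" and Mn: "M < n" and J': "J' \<subseteq> {1..<M}"
  shows "cnt V (insert M J') + cnt V J' = (n choose M) * cnt {1..M} J'"
proof -
  define Q where "Q = {xs \<in> Ls V. Des xs \<inter> {1..<M} = J' \<and> Des xs \<subseteq> {1..M}}"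
  have MJ: "M \<notin> J'" using J' by auto
  have split: "{xs\<in>Ls V. Des xs = insert M J'} \<union> {xs\<in>Ls V. Des xs = J'} = Q"
  proof
    show "{xs\<in>Ls V. Des xs = insert M J'} \<union> {xs\<in>Ls V. Des xs = J'} \<subseteq> Q"
      unfolding Q_def using J' MJ Des_subset by fastforce
    show "Q \<subseteq> {xs\<in>Ls V. Des xs = insert M J'} \<union> {xs\<in>Ls V. Des xs = J'}"
    proof
      fix xs assume xs: "xs \<in> Q"
      have "Des xs = J' \<union> (Des xs \<inter> {M})"
      proof -
        have "Des xs = (Des xs \<inter> {1..<M}) \<union> (Des xs \<inter> {M})"
          using xs Des_subset[of xs] unfolding Q_def by auto
        thus ?thesis using xs unfolding Q_def by simp
      qed
      thus "xs \<in> {xs\<in>Ls V. Des xs = insert M J'} \<union> {xs\<in>Ls V. Des xs = J'}"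
        using xs unfolding Q_def by (cases "M \<in> Des xs") auto
    qed
  qed
  have finQ1: "finite {xs\<in>Ls V. Des xs = insert M J'}" "finite {xs\<in>Ls V. Des xs = J'}"
    using finite_Ls[OF fin] by auto
  have "cnt V (insert M J') + cnt V J' = card Q"
    unfolding cnt_def using card_Un_disjoint[OF finQ1] split MJ by force
  define Sub where "Sub = {A. A \<subseteq> V \<and> card A = M}"
  define img where "img A = (\<lambda>ys. ys @ sorted_list_of_set (V - A)) ` {ys\<in>Ls A. Des ys = J'}" for A
  have Qeq: "Q = (\<Union>A\<in>Sub. img A)"
  proof
    show "Q \<subseteq> (\<Union>A\<in>Sub. img A)"
    proof
      fix xs assume xs: "xs \<in> Q"
      have dx: "distinct xs" "set xs = V" using xs unfolding Q_def Ls_def by auto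
      have lx: "length xs = n" using dx n distinct_card by fastforce
      define ys where "ys = take M xs"
      define zs where "zs = drop M xs"
      have xyz: "xs = ys @ zs" unfolding ys_def zs_def by simp
      have ly: "length ys = M" unfolding ys_def using lx Mn by simp
      have dys: "distinct ys" "distinct zs" "set ys \<inter> set zs = {}"
        using dx(1) xyz by (metis distinct_append)+
      have AV: "set ys \<subseteq> V" using dx xyz by auto
      have cA: "card (set ys) = M" using dys ly distinct_card by metis
      have Dy: "Des ys = J'" using Des_append_prefix[of ys zs] xyz ly xs unfolding Q_def by auto
      have "sorted zs"
        by (rule sorted_suffix[of ys]) (use xs xyz ly in \<open>auto simp: Q_def\<close>)
      moreover have "set zs = V - set ys" using dx xyz dys by auto
      ultimately have zs: "zs = sorted_list_of_set (V - set ys)"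
        using dys fin by (intro sorted_distinct_set_unique) auto
      have "set ys \<in> Sub" unfolding Sub_def using AV cA by auto
      moreover have "xs \<in> img (set ys)"
        unfolding img_def using xyz zs Dy dys by (auto simp: Ls_def)
      ultimately show "xs \<in> (\<Union>A\<in>Sub. img A)" by blast
    qed
  next
    show "(\<Union>A\<in>Sub. img A) \<subseteq> Q"
    proof
      fix xs assume "xs \<in> (\<Union>A\<in>Sub. img A)"
      then obtain A ys where A: "A \<subseteq> V" "card A = M" and ys: "ys \<in> Ls A" "Des ys = J'"
        and xs: "xs = ys @ sorted_list_of_set (V - A)"
        unfolding Sub_def img_def by auto
      have finA: "finite A" using A fin finite_subset by blast
      have ys2: "distinct ys" "set ys = A" using ys unfolding Ls_def by auto
      have ly: "length ys = M" using ys2 A(2) distinct_card by metis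
      have finVA: "finite (V - A)" using fin by simp
      have "distinct xs" using xs ys2 finVA by simp
      moreover have "set xs = V" using xs ys2 finVA A(1) by auto
      moreover have "Des xs \<inter> {1..<M} = J'" using Des_append_prefix[of ys] xs ys ly by simp
      moreover have "Des xs \<subseteq> {1..M}"
      proof
        fix j assume j: "j \<in> Des xs"
        have "j \<le> length ys" using Des_append_sorted[of "sorted_list_of_set (V - A)" j ys] j xs by simp
        moreover have "1 \<le> j" using j Des_subset[of xs] by auto
        ultimately show "j \<in> {1..M}" using ly by simp
      qed
      ultimately show "xs \<in> Q" unfolding Q_def Ls_def by auto
    qed
  qed
  have finSub: "finite Sub" unfolding Sub_def using fin by simp
  have finimg: "\<And>A. A \<in> Sub \<Longrightarrow> finite (img A)"
  proof -
    fix A assume "A \<in> Sub"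
    hence "finite A" unfolding Sub_def using fin finite_subset by blast
    hence "finite (Ls A)" by (rule finite_Ls)
    thus "finite (img A)" unfolding img_def by simp
  qed
  have disj: "\<And>A B. A \<in> Sub \<Longrightarrow> B \<in> Sub \<Longrightarrow> A \<noteq> B \<Longrightarrow> img A \<inter> img B = {}"
  proof -
    fix A B assume AB: "A \<in> Sub" "B \<in> Sub" "A \<noteq> B"
    { fix xs assume "xs \<in> img A" "xs \<in> img B"
      then obtain ys ws where ys: "ys \<in> Ls A" "xs = ys @ sorted_list_of_set (V - A)"
        and ws: "ws \<in> Ls B" "xs = ws @ sorted_list_of_set (V - B)"
        unfolding img_def by auto
      have "length ys = M" "length ws = M" using ys ws AB distinct_card unfolding Ls_def Sub_def
        by (metis (mono_tags, lifting) mem_Collect_eq)+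
      hence "ys = ws" using ys ws by (metis append_eq_append_conv)
      hence False using ys ws AB unfolding Ls_def by auto }
    thus "img A \<inter> img B = {}" by blast
  qed
  have cimg: "\<And>A. A \<in> Sub \<Longrightarrow> card (img A) = cnt {1..M} J'"
  proof -
    fix A assume A: "A \<in> Sub"
    have "card (img A) = cnt A J'" unfolding img_def cnt_def
      by (rule card_image) (simp add: inj_on_def)
    also have "\<dots> = cnt {1..M} J'" using A fin finite_subset unfolding Sub_def
      by (intro cnt_card) auto
    finally show "card (img A) = cnt {1..M} J'" .
  qed
  have "card Q = (\<Sum>A\<in>Sub. card (img A))"
    unfolding Qeq using finSub finimg disj by (intro card_UN_disjoint) auto
  also have "\<dots> = card Sub * cnt {1..M} J'" using cimg by simp
  also have "card Sub = n choose M" unfolding Sub_def using n_subsets[OF fin] n by simp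
  finally show ?thesis using \<open>cnt V (insert M J') + cnt V J' = card Q\<close> by simp
qed

lemma Des_map_upt: "Des (map \<pi> [1..<Suc n]) = descent_set n \<pi>"
proof -
  { fix j assume "1 \<le> j" "j < n"
    hence "map \<pi> [1..<Suc n] ! (j-1) = \<pi> j" "map \<pi> [1..<Suc n] ! j = \<pi> (Suc j)"
      by (simp_all add: nth_map del: upt_Suc)
  }
  thus ?thesis unfolding Des_def descent_set_def by auto
qed

lemma descent_count_cnt: "descent_count J n = cnt {1..n} J"
proof -
  let ?h = "\<lambda>\<pi>. map \<pi> [1..<Suc n]"
  let ?S = "{\<pi>. \<pi> permutes {1..n} \<and> descent_set n \<pi> = J}"
  have inj: "inj_on ?h ?S"
  proof (rule inj_onI)
    fix \<pi> \<sigma> assume p: "\<pi> \<in> ?S" "\<sigma> \<in> ?S" and e: "?h \<pi> = ?h \<sigma>"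
    have "\<forall>i\<in>{1..n}. \<pi> i = \<sigma> i" using e by (auto simp: map_eq_conv)
    moreover have "\<forall>i. i \<notin> {1..n} \<longrightarrow> \<pi> i = \<sigma> i"
      using p by (auto simp: permutes_not_in)
    ultimately show "\<pi> = \<sigma>" by blast
  qed
  have img: "?h ` ?S = {xs \<in> Ls {1..n}. Des xs = J}"
  proof
    show "?h ` ?S \<subseteq> {xs \<in> Ls {1..n}. Des xs = J}"
    proof
      fix xs assume "xs \<in> ?h ` ?S"
      then obtain \<pi> where p: "\<pi> permutes {1..n}" "descent_set n \<pi> = J" and xs: "xs = ?h \<pi>" by auto
      have "distinct xs" using xs permutes_inj_on[OF p(1)]
        by (simp add: distinct_map atLeastLessThanSuc_atLeastAtMost del: upt_Suc)
      moreover have "set xs = {1..n}" using xs permutes_image[OF p(1)]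
        by (simp add: atLeastLessThanSuc_atLeastAtMost del: upt_Suc)
      ultimately show "xs \<in> {xs \<in> Ls {1..n}. Des xs = J}"
        using Des_map_upt xs p(2) by (auto simp: Ls_def)
    qed
  next
    show "{xs \<in> Ls {1..n}. Des xs = J} \<subseteq> ?h ` ?S"
    proof
      fix xs assume xs: "xs \<in> {xs \<in> Ls {1..n}. Des xs = J}"
      have dx: "distinct xs" "set xs = {1..n}" "Des xs = J" using xs by (auto simp: Ls_def)
      have lx: "length xs = n" using dx distinct_card by fastforce
      define \<pi> where "\<pi> i = (if i \<in> {1..n} then xs!(i-1) else i)" for i
      have hx: "?h \<pi> = xs"
        by (rule nth_equalityI) (auto simp: lx \<pi>_def nth_map simp del: upt_Suc)
      have injp: "inj_on \<pi> {1..n}"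
      proof (rule inj_onI)
        fix i k assume ik: "i \<in> {1..n}" "k \<in> {1..n}" "\<pi> i = \<pi> k"
        hence "xs!(i-1) = xs!(k-1)" unfolding \<pi>_def by simp
        hence e: "i - 1 = k - 1" using dx(1) ik lx nth_eq_iff_index_eq by fastforce
        have "1 \<le> i" "1 \<le> k" using ik(1,2) by auto
        thus "i = k" using e by presburger
      qed
      have sub: "\<pi> ` {1..n} \<subseteq> {1..n}"
      proof
        fix u assume "u \<in> \<pi> ` {1..n}"
        then obtain i where i: "i \<in> {1..n}" "u = xs!(i-1)" unfolding \<pi>_def by auto
        hence "u \<in> set xs" using lx by auto
        thus "u \<in> {1..n}" using dx by simp
      qed
      have "card (\<pi> ` {1..n}) = card {1..n}" using card_image[OF injp] by simp
      hence "\<pi> ` {1..n} = {1..n}" using sub by (intro card_subset_eq) auto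
      hence "\<pi> permutes {1..n}" using injp
        by (intro bij_imp_permutes) (auto simp: bij_betw_def \<pi>_def)
      moreover have "descent_set n \<pi> = J" using Des_map_upt[of \<pi> n] hx dx by simp
      ultimately show "xs \<in> ?h ` ?S" using hx by force
    qed
  qed
  show ?thesis unfolding descent_count_def cnt_def using card_image[OF inj] img by simp
qed

lemma cnt_pos: "J \<subseteq> {1..<n} \<Longrightarrow> \<exists>xs. xs \<in> Ls {1..n} \<and> Des xs = J"
proof (induction n arbitrary: J rule: less_induct)
  case (less n)
  show ?case
  proof (cases "J = {}")
    case True
    have "Des [1..<Suc n] = {}" by (rule Des_sorted) (simp del: upt_Suc)
    thus ?thesis using True
      by (intro exI[of _ "[1..<Suc n]"]) (auto simp: Ls_def atLeastLessThanSuc_atLeastAtMost simp del: upt_Suc)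
  next
    case False
    define M where "M = Max J"
    have finJ: "finite J" using less.prems finite_subset by blast
    have MJ: "M \<in> J" unfolding M_def using False finJ by simp
    have Mn: "M < n" "1 \<le> M" using MJ less.prems by auto
    define J' where "J' = J - {M}"
    have J'sub: "J' \<subseteq> {1..<M}"
    proof
      fix j assume "j \<in> J'"
      hence "j \<in> J" "j \<noteq> M" unfolding J'_def by auto
      moreover have "j \<le> M" using \<open>j \<in> J\<close> finJ unfolding M_def by simp
      ultimately show "j \<in> {1..<M}" using less.prems by auto
    qed
    obtain ys where ys: "ys \<in> Ls {1..M}" "Des ys = J'" using less.IH[OF Mn(1) J'sub] by blast
    define k where "k = n - M"
    define xs where "xs = map (\<lambda>v. v + k) ys @ [1..<Suc k]"
    have ly: "length ys = M" using ys distinct_card unfolding Ls_def by fastforce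
    have k1: "1 \<le> k" using Mn unfolding k_def by simp
    have sm: "strict_mono_on (set ys) (\<lambda>v. v + k)" by (rule strict_mono_onI) simp
    have "distinct xs" using ys unfolding xs_def Ls_def by (auto simp: distinct_map inj_on_def)
    moreover have "set xs = {1..n}"
    proof -
      have "set xs = (\<lambda>v. v + k) ` {1..M} \<union> {1..k}" using ys unfolding xs_def Ls_def by auto
      also have "(\<lambda>v. v + k) ` {1..M} = {1+k..M+k}" by (rule image_add_atLeastAtMost')
      also have "M + k = n" using Mn unfolding k_def by simp
      finally show ?thesis using Mn unfolding k_def by auto
    qed
    moreover have "Des xs = J"
    proof -
      have p1: "Des xs \<inter> {1..<M} = J'"
        using Des_append_prefix[of "map (\<lambda>v. v + k) ys" "[1..<Suc k]"] Des_map[OF sm] ys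
        unfolding xs_def by (simp add: ly)
      have p2: "Des xs \<subseteq> {1..M}"
      proof
        fix j assume j: "j \<in> Des xs"
        have "j \<le> length (map (\<lambda>v. v + k) ys)"
          by (rule Des_append_sorted[of "[1..<Suc k]"]) (use j xs_def in \<open>auto simp del: upt_Suc\<close>)
        moreover have "1 \<le> j" using j Des_subset[of xs] by auto
        ultimately show "j \<in> {1..M}" using ly by simp
      qed
      have p3: "M \<in> Des xs"
      proof -
        have "xs!(M-1) = ys!(M-1) + k" using Mn ly unfolding xs_def by (simp add: nth_append)
        moreover have "xs!M = 1" using Mn ly k1 unfolding xs_def by (simp add: nth_append)
        moreover have "length xs = M + k" using ly unfolding xs_def by simp
        moreover have "ys!(M-1) \<in> set ys" using ly Mn by simp
        hence "1 \<le> ys!(M-1)" using ys unfolding Ls_def by auto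
        ultimately show ?thesis unfolding Des_def using Mn k1 by auto
      qed
      have "Des xs = (Des xs \<inter> {1..<M}) \<union> (Des xs \<inter> {M})" using p2 by auto
      also have "\<dots> = insert M J'" using p1 p3 by auto
      also have "\<dots> = J" unfolding J'_def using MJ by auto
      finally show ?thesis .
    qed
    ultimately show ?thesis unfolding Ls_def by blast
  qed
qed



definition binp :: "nat \<Rightarrow> complex poly" where
  "binp M = smult (1 / fact M) (\<Prod>k\<in>{0..<M}. [:- of_nat k, 1:])"

lemma poly_binp: "poly (binp M) z = z gchoose M"
  by (simp add: binp_def poly_prod gbinomial_prod_rev)

definition Mx :: "nat set \<Rightarrow> nat" where "Mx J = (if J = {} then 0 else Max J)"

lemma J'_sub:
  assumes "finite J" "0 \<notin> J" "J \<noteq> {}"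
  shows "J - {Max J} \<subseteq> {1..<Max J}" "Mx (J - {Max J}) \<le> Max J" "1 \<le> Max J"
    "insert (Max J) (J - {Max J}) = J"
proof -
  have MJ: "Max J \<in> J" using assms by simp
  show "J - {Max J} \<subseteq> {1..<Max J}"
  proof
    fix j assume "j \<in> J - {Max J}"
    moreover hence "j \<le> Max J" using assms by simp
    ultimately show "j \<in> {1..<Max J}" using assms(2)
      by (metis DiffE atLeastLessThan_iff insertCI le_neq_implies_less less_one linorder_not_le)
  qed
  thus "Mx (J - {Max J}) \<le> Max J" unfolding Mx_def using assms
    by (auto intro!: Max.boundedI)
  show "1 \<le> Max J" using MJ assms(2) by (cases "Max J") auto
  show "insert (Max J) (J - {Max J}) = J" using MJ by auto
qed

lemma step:
  assumes fin: "finite J" and z: "0 \<notin> J" and ne: "J \<noteq> {}"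
    and p': "\<forall>n. n > Mx (J - {Max J}) \<longrightarrow> poly p' (of_nat n) = of_nat (descent_count (J - {Max J}) n)"
  shows "\<forall>n. n > Max J \<longrightarrow> poly (smult (of_nat (descent_count (J - {Max J}) (Max J))) (binp (Max J)) - p') (of_nat n)
            = of_nat (descent_count J n)"
proof (intro allI impI)
  fix n assume n: "Max J < n"
  let ?M = "Max J" and ?J' = "J - {Max J}"
  have nat_eq: "descent_count J n + descent_count ?J' n = (n choose ?M) * descent_count ?J' ?M"
    using cnt_rec[of "{1..n}" n ?M ?J'] J'_sub[OF fin z ne] n
    by (simp add: descent_count_cnt)
  have "poly p' (of_nat n) = of_nat (descent_count ?J' n)"
    using p' J'_sub(2)[OF fin z ne] n by simp
  hence "poly (smult (of_nat (descent_count ?J' ?M)) (binp ?M) - p') (of_nat n)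
      = of_nat (descent_count ?J' ?M) * of_nat (n choose ?M) - of_nat (descent_count ?J' n)"
    by (simp add: poly_binp binomial_gbinomial)
  also have "\<dots> = (of_nat (descent_count J n) :: complex)"
  proof -
    have "(of_nat ((n choose ?M) * descent_count ?J' ?M) :: complex)
        = of_nat (descent_count J n) + of_nat (descent_count ?J' n)"
      using nat_eq by (metis of_nat_add)
    thus ?thesis by (simp add: algebra_simps)
  qed
  finally show "poly (smult (of_nat (descent_count ?J' ?M)) (binp ?M) - p') (of_nat n)
            = of_nat (descent_count J n)" .
qed

lemma count_le_fact: "descent_count J n \<le> fact n"
proof -
  have "descent_count J n \<le> card {\<pi>. \<pi> permutes {1..n}}"
    unfolding descent_count_def by (rule card_mono) (auto simp: finite_permutations)
  thus ?thesis using card_permutations[of "{1..n}" n] by simp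
qed

lemma poly_ex:
  assumes "finite J" "0 \<notin> J"
  shows "\<exists>p. (\<forall>n. n > Mx J \<longrightarrow> poly p (of_nat n) = of_nat (descent_count J n)) \<and>
             (\<forall>z. cmod (poly p z) \<le> (\<Sum>i\<in>insert 0 J. fact i * cmod (z gchoose i)))"
  using assms
proof (induction "card J" arbitrary: J rule: less_induct)
  case less
  show ?case
  proof (cases "J = {}")
    case True
    have "\<And>n. descent_count {} n = 1" by (simp add: descent_count_cnt cnt_empty)
    thus ?thesis using True by (intro exI[of _ "[:1:]"]) auto
  next
    case False
    let ?M = "Max J" and ?J' = "J - {Max J}"
    have "card ?J' < card J" using less.prems False by (simp add: card_gt_0_iff)
    moreover have "finite ?J'" "0 \<notin> ?J'" using less.prems by auto
    ultimately obtain p' where p1: "\<forall>n. n > Mx ?J' \<longrightarrow> poly p' (of_nat n) = of_nat (descent_count ?J' n)"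
      and p2: "\<forall>z. cmod (poly p' z) \<le> (\<Sum>i\<in>insert 0 ?J'. fact i * cmod (z gchoose i))"
      using less.hyps by blast
    let ?a = "descent_count ?J' ?M"
    let ?p = "smult (of_nat ?a) (binp ?M) - p'"
    have v: "\<forall>n. n > Mx J \<longrightarrow> poly ?p (of_nat n) = of_nat (descent_count J n)"
      using step[OF less.prems False p1] False by (simp add: Mx_def)
    have b: "cmod (poly ?p z) \<le> (\<Sum>i\<in>insert 0 J. fact i * cmod (z gchoose i))" for z
    proof -
      have e: "cmod (of_nat ?a * (z gchoose ?M)) = of_nat ?a * cmod (z gchoose ?M)"
        by (simp add: norm_mult)
      have "cmod (poly ?p z) \<le> cmod (of_nat ?a * (z gchoose ?M)) + cmod (poly p' z)"
        unfolding poly_diff poly_smult poly_binp by (rule norm_triangle_ineq4)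
      hence "cmod (poly ?p z) \<le> of_nat ?a * cmod (z gchoose ?M) + cmod (poly p' z)"
        using e by simp
      also have "\<dots> \<le> fact ?M * cmod (z gchoose ?M) + (\<Sum>i\<in>insert 0 ?J'. fact i * cmod (z gchoose i))"
      proof -
        have "real ?a \<le> fact ?M" using count_le_fact[of ?J' ?M] by (metis of_nat_fact of_nat_le_iff)
        thus ?thesis using p2 by (intro add_mono mult_right_mono) auto
      qed
      also have "\<dots> = (\<Sum>i\<in>insert ?M (insert 0 ?J'). fact i * cmod (z gchoose i))"
        using less.prems J'_sub(3)[OF less.prems False] by (subst sum.insert) auto
      also have "insert ?M (insert 0 ?J') = insert 0 J"
        using J'_sub(4)[OF less.prems False] by auto
      finally show ?thesis .
    qed
    show ?thesis using v b by blast
  qed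
qed

lemma poly_uniq:
  fixes p q :: "complex poly"
  assumes "\<forall>n. n > N \<longrightarrow> poly p (of_nat n) = poly q (of_nat n)"
  shows "p = q"
proof (rule ccontr)
  assume "p \<noteq> q"
  hence "p - q \<noteq> 0" by simp
  hence fin: "finite {x. poly (p - q) x = 0}" by (rule poly_roots_finite)
  have "of_nat ` {N<..} \<subseteq> {x. poly (p - q) x = (0::complex)}" using assms by auto
  hence "finite (of_nat ` {N<..} :: complex set)" using fin finite_subset by blast
  moreover have "inj_on (of_nat :: nat \<Rightarrow> complex) {N<..}" by (auto simp: inj_on_def)
  ultimately have "finite {N<..}" using finite_imageD by blast
  thus False using infinite_Ioi by blast
qed

lemma prod_bound:
  fixes z :: complex and \<rho> :: real
  assumes rp: "0 < \<rho>" and far: "\<forall>k<m. \<rho> < cmod (z - of_nat k)" and im: "i < m"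
  shows "fact i * cmod (z gchoose i) * \<rho>^(m-i) < fact m * cmod (z gchoose m)"
proof -
  define P where "P j = (\<Prod>k\<in>{0..<j}. cmod (z - of_nat k))" for j
  have PG: "fact j * cmod (z gchoose j) = P j" for j
    unfolding P_def gbinomial_prod_rev by (simp add: norm_divide prod_norm norm_fact)
  have split: "P m = P i * (\<Prod>k\<in>{i..<m}. cmod (z - of_nat k))"
    unfolding P_def using im by (simp add: prod.atLeastLessThan_concat)
  have c: "\<rho>^(m-i) = (\<Prod>k\<in>{i..<m}. \<rho>)" by simp
  have lt: "(\<Prod>k\<in>{i..<m}. \<rho>) < (\<Prod>k\<in>{i..<m}. cmod (z - of_nat k))"
    using im far rp by (intro prod_mono_strict[of i]) auto
  have pos: "0 < cmod (z - of_nat k)" if "k \<in> {0..<i}" for k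
  proof -
    have "k < m" using that im by simp
    hence "\<rho> < cmod (z - of_nat k)" using far by blast
    thus ?thesis using rp by linarith
  qed
  have Ppos: "0 < P i" unfolding P_def using pos by (intro prod_pos) blast
  have "P i * \<rho>^(m-i) < P i * (\<Prod>k\<in>{i..<m}. cmod (z - of_nat k))"
    unfolding c by (rule mult_strict_left_mono[OF lt Ppos])
  also have "\<dots> = P m" using split by simp
  also have "\<dots> = fact m * cmod (z gchoose m)" using PG[of m] by simp
  finally show ?thesis using PG[of i] by simp
qed

lemma sum_bound:
  fixes \<rho> :: real and S :: "nat set"
  assumes fin: "finite S" and ne: "S \<noteq> {}" and le: "\<forall>i\<in>S. i \<le> mm" and mm: "mm < m"
    and rho: "\<rho> = min (fact m + 1) ((fact m * real (card S)) powr (1 / real (m - mm)))"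
  shows "1 \<le> \<rho>" "fact m * (\<Sum>i\<in>S. (1/\<rho>)^(m-i)) \<le> 1"
proof -
  define X where "X = fact m * real (card S)"
  define d where "d = m - mm"
  define B where "B = X powr (1 / real d)"
  have cS: "1 \<le> card S" using fin ne by (simp add: Suc_leI card_gt_0_iff)
  have cS': "(1::real) \<le> real (card S)" using cS by simp
  have X1: "1 \<le> X" unfolding X_def using mult_mono[of 1 "fact m" 1 "real (card S)"] cS' by simp
  have d1: "1 \<le> d" unfolding d_def using mm by simp
  have B1: "1 \<le> B" unfolding B_def using X1 by (intro ge_one_powr_ge_zero) auto
  have f1: "(1::real) \<le> fact m" by simp
  show r1: "1 \<le> \<rho>" using rho B1 f1 unfolding B_def X_def d_def by simp
  define r where "r = 1 / \<rho>"
  have r0: "0 < r" "r \<le> 1" unfolding r_def using r1 by auto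
  show "fact m * (\<Sum>i\<in>S. (1/\<rho>)^(m-i)) \<le> 1"
  proof (cases "\<rho> = B")
    case True
    have "B ^ d = B powr real d" using B1 by (simp add: powr_realpow)
    also have "\<dots> = X powr (1 / real d * real d)" unfolding B_def by (simp add: powr_powr)
    also have "\<dots> = X" using d1 X1 by simp
    finally have Bd: "B ^ d = X" .
    have "(\<Sum>i\<in>S. r^(m-i)) \<le> (\<Sum>i\<in>S. r^d)"
      using le r0 unfolding d_def by (intro sum_mono power_decreasing) auto
    also have "\<dots> = real (card S) * r^d" by simp
    also have "r^d = 1 / X" unfolding r_def using True Bd by (simp add: power_one_over)
    finally have "(\<Sum>i\<in>S. r^(m-i)) \<le> real (card S) / X" by simp
    hence "fact m * (\<Sum>i\<in>S. r^(m-i)) \<le> fact m * (real (card S) / X)"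
      by (intro mult_left_mono) auto
    also have "\<dots> = 1" unfolding X_def using cS by simp
    finally show ?thesis unfolding r_def .
  next
    case False
    hence rf: "\<rho> = fact m + 1" using rho unfolding B_def X_def d_def by linarith
    have inj: "inj_on (\<lambda>i. m - i) S" using le mm by (intro inj_onI) force
    have "(\<Sum>i\<in>S. r^(m-i)) = (\<Sum>e\<in>(\<lambda>i. m - i) ` S. r^e)"
      by (simp add: sum.reindex[OF inj])
    also have "\<dots> \<le> (\<Sum>e\<in>{1..m}. r^e)"
      using le mm r0 by (intro sum_mono2) auto
    also have "\<dots> = (\<Sum>e<m. r^(Suc e))" by (simp add: sum.atLeast1_atMost_eq)
    also have "\<dots> = r * (\<Sum>e<m. r^e)" by (simp add: sum_distrib_left)
    also have "\<dots> = r * ((1 - r^m) / (1 - r))"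
    proof -
      have "r \<noteq> 1" unfolding r_def rf using f1 by simp
      thus ?thesis by (simp add: sum_gp_strict)
    qed
    also have "\<dots> \<le> r * (1 / (1 - r))"
    proof -
      have "1 < fact m + (1::real)" using f1 by simp
      hence "1 / (fact m + (1::real)) < 1" using f1 by (subst divide_less_eq_1_pos) (linarith, linarith)
      hence "r < 1" unfolding r_def rf .
      moreover have "0 \<le> r^m" using r0 by simp
      ultimately show ?thesis using r0 by (intro mult_left_mono divide_right_mono) auto
    qed
    also have "\<dots> = 1 / fact m"
    proof -
      have fp: "1 + fact m \<noteq> (0::real)" "fact m \<noteq> (0::real)" using f1 by linarith+
      show ?thesis unfolding r_def rf using fp by (simp add: field_simps)
    qed
    finally have "(\<Sum>i\<in>S. r^(m-i)) \<le> 1 / fact m" .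
    hence "fact m * (\<Sum>i\<in>S. r^(m-i)) \<le> fact m * (1 / fact m)"
      by (intro mult_left_mono) auto
    thus ?thesis unfolding r_def by simp
  qed
qed

theorem theorem4p13:
  fixes I :: "nat set" and m mm :: nat and \<rho> :: real
  assumes "finite I" and "0 \<notin> I" and "card I \<ge> 2"
    and "m = Max I" and "mm = Max (I - {m})"
    and "\<rho> = min (fact m + 1) ((fact m * real (card I)) powr (1 / real (m - mm)))"
  shows "\<forall>z. poly (descent_poly I) z = 0 \<longrightarrow>
           (\<exists>k<m. cmod (z - of_nat k) \<le> \<rho>) \<and>
           cmod z \<le> \<rho> + real m - 1 \<and> Re z \<ge> - \<rho> \<and> \<bar>Im z\<bar> \<le> \<rho>"
proof (intro allI impI)
  fix z assume root: "poly (descent_poly I) z = 0"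
  note fin = assms(1) and z0 = assms(2)
  have ne: "I \<noteq> {}" using assms(3) by auto
  define J' where "J' = I - {m}"
  have J'sub: "J' \<subseteq> {1..<m}" "Mx J' \<le> m" "1 \<le> m" "insert m J' = I"
    using J'_sub[OF fin z0 ne] unfolding J'_def assms(4) by auto
  have cJ': "card J' = card I - 1" unfolding J'_def using fin ne assms(4) by simp
  have J'ne: "J' \<noteq> {}" using cJ' assms(3) by auto
  have finJ': "finite J'" "0 \<notin> J'" unfolding J'_def using fin z0 by auto
  have mmJ: "mm = Max J'" unfolding J'_def assms(5) ..
  have mmle: "\<forall>i\<in>J'. i \<le> mm" using finJ' mmJ by simp
  have mmm: "mm < m" using mmJ J'ne finJ' J'sub(1) Max_in by fastforce
  obtain p' where p1: "\<forall>n. n > Mx J' \<longrightarrow> poly p' (of_nat n) = of_nat (descent_count J' n)"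
    and p2: "\<forall>z. cmod (poly p' z) \<le> (\<Sum>i\<in>insert 0 J'. fact i * cmod (z gchoose i))"
    using poly_ex[OF finJ'] by blast
  define a where "a = descent_count J' m"
  have a1: "1 \<le> a"
  proof -
    obtain xs where "xs \<in> Ls {1..m}" "Des xs = J'" using cnt_pos[OF J'sub(1)] by blast
    hence "{xs \<in> Ls {1..m}. Des xs = J'} \<noteq> {}" by blast
    moreover have "finite {xs \<in> Ls {1..m}. Des xs = J'}" using finite_Ls[of "{1..m}"] by simp
    ultimately have "0 < cnt {1..m} J'" unfolding cnt_def by (simp add: card_gt_0_iff)
    thus ?thesis unfolding a_def descent_count_cnt by simp
  qed
  define p where "p = smult (of_nat a) (binp m) - p'"
  have pv: "\<forall>n. n > Max I \<longrightarrow> poly p (of_nat n) = of_nat (descent_count I n)"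
    using step[OF fin z0 ne] p1 unfolding p_def a_def J'_def assms(4) by blast
  have "descent_poly I = p"
    unfolding descent_poly_def
  proof (rule the_equality)
    show "\<forall>n. (if I = {} then 0 else Max I) < n \<longrightarrow> poly p (of_nat n) = of_nat (descent_count I n)"
      using pv ne by simp
  next
    fix q :: "complex poly" assume "\<forall>n. (if I = {} then 0 else Max I) < n \<longrightarrow> poly q (of_nat n) = of_nat (descent_count I n)"
    hence "\<forall>n. n > Max I \<longrightarrow> poly q (of_nat n) = poly p (of_nat n)" using pv ne by simp
    thus "q = p" by (rule poly_uniq)
  qed
  hence "poly p z = 0" using root by simp
  hence eq: "of_nat a * (z gchoose m) = poly p' z" unfolding p_def by (simp add: poly_binp)
  define S where "S = insert 0 J'"
  have finS: "finite S" "S \<noteq> {}" unfolding S_def using finJ' by auto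
  have cS: "card S = card I" unfolding S_def using finJ' cJ' assms(3) by simp
  have Sle: "\<forall>i\<in>S. i \<le> mm" unfolding S_def using mmle by simp
  have rho': "\<rho> = min (fact m + 1) ((fact m * real (card S)) powr (1 / real (m - mm)))"
    using assms(6) cS by simp
  note sb = sum_bound[OF finS Sle mmm rho']
  have disc: "\<exists>k<m. cmod (z - of_nat k) \<le> \<rho>"
  proof (rule ccontr)
    assume "\<not> (\<exists>k<m. cmod (z - of_nat k) \<le> \<rho>)"
    hence far: "\<forall>k<m. \<rho> < cmod (z - of_nat k)" by force
    have rp: "0 < \<rho>" using sb(1) by linarith
    let ?G = "cmod (z gchoose m)"
    have each: "fact i * cmod (z gchoose i) < fact m * ?G * (1/\<rho>)^(m-i)" if "i \<in> S" for i
    proof -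
      have im: "i < m" using that Sle mmm by force
      have "fact i * cmod (z gchoose i) * \<rho>^(m-i) < fact m * ?G"
        by (rule prod_bound[OF rp far im])
      moreover have "0 < \<rho>^(m-i)" using rp by simp
      ultimately show ?thesis by (simp add: power_one_over field_simps)
    qed
    have "cmod (poly p' z) \<le> (\<Sum>i\<in>S. fact i * cmod (z gchoose i))" using p2 unfolding S_def by blast
    also have "\<dots> < (\<Sum>i\<in>S. fact m * ?G * (1/\<rho>)^(m-i))"
      using finS each by (intro sum_strict_mono) auto
    also have "\<dots> = ?G * (fact m * (\<Sum>i\<in>S. (1/\<rho>)^(m-i)))"
      by (simp add: sum_distrib_left mult_ac)
    also have "\<dots> \<le> ?G * 1" using sb(2) by (intro mult_left_mono) auto
    also have "\<dots> \<le> real a * ?G"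
    proof -
      have "(1::real) \<le> real a" using a1 by simp
      thus ?thesis using mult_right_mono[of 1 "real a" ?G] by simp
    qed
    also have "\<dots> = cmod (poly p' z)" using eq[symmetric] by (simp add: norm_mult)
    finally show False by simp
  qed
  then obtain k where k: "k < m" "cmod (z - of_nat k) \<le> \<rho>" by blast
  have km: "real k \<le> real m - 1" using k(1) by linarith
  have "cmod z \<le> cmod (of_nat k :: complex) + cmod (z - of_nat k)"
    using norm_triangle_sub[of z "of_nat k"] by simp
  hence c1: "cmod z \<le> \<rho> + real m - 1" using k km by simp
  have "Re z = Re (z - of_nat k) + real k" by simp
  moreover have "- cmod (z - of_nat k) \<le> Re (z - of_nat k)" using abs_Re_le_cmod[of "z - of_nat k"] by linarith
  ultimately have c2: "Re z \<ge> - \<rho>" using k by linarith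
  have "\<bar>Im z\<bar> = \<bar>Im (z - of_nat k)\<bar>" by simp
  also have "\<dots> \<le> cmod (z - of_nat k)" by (rule abs_Im_le_cmod)
  finally have c3: "\<bar>Im z\<bar> \<le> \<rho>" using k by linarith
  show "(\<exists>k<m. cmod (z - of_nat k) \<le> \<rho>) \<and> cmod z \<le> \<rho> + real m - 1 \<and> Re z \<ge> - \<rho> \<and> \<bar>Im z\<bar> \<le> \<rho>"
    using disc c1 c2 c3 by blast
qed


end
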